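(* Let $H:\mathbb{R}^n\rightrightarrows\mathbb{R}^n$ be a convex process such that $\operatorname{dom}H+\mathcal{R}_-=\mathbb{R}^n$. Then $\mathcal{F}(H)^-\cap\operatorname{cl}(\mathcal{F}(H^+))=\{0\}$ and $\mathcal{F}(H)^-\cap\operatorname{cl}(\mathcal{F}(H^-))=\{0\}$.
   Context: A set-valued map $H:\mathbb{R}^n\rightrightarrows\mathbb{R}^n$ is a convex process (resp. linear process) if its graph $\operatorname{graph}(H)=\{(x,y)\mid y\in H(x)\}$ is a convex cone (resp. a subspace); $\operatorname{dom}(H)=\{x\mid H(x)\neq\emptyset\}$. For a set-valued map $G$, a trajectory is a sequence $(x_k)_{k\ge0}$ with $x_{k+1}\in G(x_k)$ for all $k\ge0$; the feasible set $\mathcal{F}(G)$ is the set of all $\xi$ such that there is a trajectory with $x_0=\xi$. A $q$-step trajectory is a finite sequence $(x_k)_{k=0}^q$ with $x_{k+1}\in G(x_k)$ for $0\le k<q$; the reachable set $\mathcal{R}(G)$ is the set of all $\xi$ for which there exist $q\ge 0$ and a $q$-step trajectory with $x_0=0$, $x_q=\xi$. For a convex process $H$, $L_-$ is the linear process with $\operatorname{graph}(L_-)=\operatorname{graph}(H)\cap(-\operatorname{graph}(H))$, and $\mathcal{R}_-:=\mathcal{R}(L_-)$. For a set $\mathcal{C}$, its negative polar cone is $\mathcal{C}^-=\{y\mid\langle x,y\rangle\le0\ \forall x\in\mathcal{C}\}$. The negative and positive dual processes are defined by $p\in H^-(q)\iff\langle p,x\rangle\ge\langle q,y\rangle$ for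 all $(x,y)\in\operatorname{graph}(H)$, and $p\in H^+(q)\iff\langle p,x\rangle\le\langle q,y\rangle$ for all $(x,y)\in\operatorname{graph}(H)$. $\operatorname{cl}$ denotes closure. *)

theory Defs
  imports "HOL-Analysis.Analysis"
begin

definition graph :: "('a \<Rightarrow> 'a set) \<Rightarrow> ('a \<times> 'a) set" where
  "graph H = {(x, y). y \<in> H x}"

definition sv_dom :: "('a \<Rightarrow> 'a set) \<Rightarrow> 'a set" where
  "sv_dom H = {x. H x \<noteq> {}}"

definition convex_process :: "('a::real_vector \<Rightarrow> 'a set) \<Rightarrow> bool" where
  "convex_process H \<longleftrightarrow> convex (graph H) \<and> cone (graph H)"

definition linear_process :: "('a::real_vector \<Rightarrow> 'a set) \<Rightarrow> bool" where
  "linear_process H \<longleftrightarrow> subspace (graph H)"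

definition feasible_set :: "('a \<Rightarrow> 'a set) \<Rightarrow> 'a set" where
  "feasible_set G = {\<xi>. \<exists>x::nat \<Rightarrow> 'a. x 0 = \<xi> \<and> (\<forall>k. x (Suc k) \<in> G (x k))}"

definition reachable_set :: "('a::zero \<Rightarrow> 'a set) \<Rightarrow> 'a set" where
  "reachable_set G = {\<xi>. \<exists>(q::nat) (x::nat \<Rightarrow> 'a). x 0 = 0 \<and> x q = \<xi> \<and>
                          (\<forall>k<q. x (Suc k) \<in> G (x k))}"

definition L_minus :: "('a::real_vector \<Rightarrow> 'a set) \<Rightarrow> 'a \<Rightarrow> 'a set" where
  "L_minus H = (\<lambda>x. {y. (x, y) \<in> graph H \<and> (-x, -y) \<in> graph H})"

definition R_minus :: "('a::real_vector \<Rightarrow> 'a set) \<Rightarrow> 'a set" where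
  "R_minus H = reachable_set (L_minus H)"

definition neg_polar :: "'a::real_inner set \<Rightarrow> 'a set" where
  "neg_polar C = {y. \<forall>x\<in>C. inner x y \<le> 0}"

definition neg_dual :: "('a::real_inner \<Rightarrow> 'a set) \<Rightarrow> 'a \<Rightarrow> 'a set" where
  "neg_dual H = (\<lambda>q. {p. \<forall>(x, y)\<in>graph H. inner p x \<ge> inner q y})"

definition pos_dual :: "('a::real_inner \<Rightarrow> 'a set) \<Rightarrow> 'a \<Rightarrow> 'a set" where
  "pos_dual H = (\<lambda>q. {p. \<forall>(x, y)\<in>graph H. inner p x \<le> inner q y})"

end

theory Submission
  imports Defs
begin

lemma g_add:
  assumes "convex_process H" "(a,b) \<in> graph H" "(c,d) \<in> graph H"
  shows "(a+c, b+d) \<in> graph H"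
proof -
  have cv: "convex (graph H)" and cn: "cone (graph H)" using assms(1) by (auto simp: convex_process_def)
  have "(1/2::real) *\<^sub>R (a,b) + (1/2::real) *\<^sub>R (c,d) \<in> graph H"
    using cv assms(2,3) unfolding convex_def by (metis add_divide_distrib divide_self_if zero_le_divide_1_iff zero_le_numeral one_add_one zero_neq_numeral)
  then have "(2::real) *\<^sub>R ((1/2::real) *\<^sub>R (a,b) + (1/2::real) *\<^sub>R (c,d)) \<in> graph H"
    using cn unfolding cone_def by auto
  then show ?thesis by (simp add: scaleR_add_right)
qed

lemma g_scale:
  assumes "convex_process H" "(a,b) \<in> graph H" "c \<ge> 0"
  shows "(c *\<^sub>R a, c *\<^sub>R b) \<in> graph H"
proof -
  have cn: "cone (graph H)" using assms(1) by (auto simp: convex_process_def)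
  then have "c *\<^sub>R (a,b) \<in> graph H" using assms unfolding cone_def by blast
  then show ?thesis by simp
qed

lemma L_iff: "b \<in> L_minus H a \<longleftrightarrow> (a,b) \<in> graph H \<and> (-a,-b) \<in> graph H"
  by (simp add: L_minus_def)

lemma L_add:
  assumes "convex_process H" "b \<in> L_minus H a" "d \<in> L_minus H c"
  shows "b + d \<in> L_minus H (a + c)"
  using assms g_add[OF assms(1)] unfolding L_iff by (metis minus_add_distrib)

lemma L_neg:
  assumes "b \<in> L_minus H a" shows "-b \<in> L_minus H (-a)"
  using assms unfolding L_iff by simp

lemma L_scale:
  assumes "convex_process H" "b \<in> L_minus H a"
  shows "c *\<^sub>R b \<in> L_minus H (c *\<^sub>R a)"
proof (cases "c \<ge> 0")
  case True
  then show ?thesis using assms g_scale[OF assms(1)] unfolding L_iff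
    by (metis scaleR_minus_right)
next
  case False
  then have "-c \<ge> 0" by simp
  then show ?thesis using assms g_scale[OF assms(1), of "-a" "-b" "-c"]  g_scale[OF assms(1), of "a" "b" "-c"]
    unfolding L_iff by simp
qed

lemma L_sum:
  assumes "convex_process H" "(0,0) \<in> graph H"
  shows "finite A \<Longrightarrow> (\<forall>i\<in>A. g i \<in> L_minus H (f i)) \<Longrightarrow> sum g A \<in> L_minus H (sum f A)"
proof (induction A rule: finite_induct)
  case empty
  then show ?case using assms(2) by (simp add: L_iff)
next
  case (insert x F)
  then show ?case using L_add[OF assms(1)] by simp
qed

definition Rq :: "('a::real_vector \<Rightarrow> 'a set) \<Rightarrow> nat \<Rightarrow> 'a set" where
  "Rq H q = {\<xi>. \<exists>x. x 0 = 0 \<and> x q = \<xi> \<and> (\<forall>k<q. x (Suc k) \<in> L_minus H (x k))}"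

lemma R_minus_Rq: "R_minus H = (\<Union>q. Rq H q)"
  unfolding R_minus_def reachable_set_def Rq_def by auto

lemma Rq_subspace:
  assumes "convex_process H" "(0,0) \<in> graph H"
  shows "subspace (Rq H q)"
proof (rule subspaceI)
  show "0 \<in> Rq H q" unfolding Rq_def
    by (rule CollectI, rule exI[of _ "\<lambda>_. 0"]) (use assms(2) in \<open>simp add: L_iff\<close>)
next
  fix a b assume "a \<in> Rq H q" "b \<in> Rq H q"
  then obtain x y where x: "x 0 = 0" "x q = a" "\<forall>k<q. x (Suc k) \<in> L_minus H (x k)"
    and y: "y 0 = 0" "y q = b" "\<forall>k<q. y (Suc k) \<in> L_minus H (y k)" unfolding Rq_def by blast
  show "a + b \<in> Rq H q" unfolding Rq_def
    by (rule CollectI, rule exI[of _ "\<lambda>k. x k + y k"]) (use x y L_add[OF assms(1)] in auto)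
next
  fix c and a :: 'a assume "a \<in> Rq H q"
  then obtain x where x: "x 0 = 0" "x q = a" "\<forall>k<q. x (Suc k) \<in> L_minus H (x k)"
    unfolding Rq_def by blast
  show "c *\<^sub>R a \<in> Rq H q" unfolding Rq_def
    by (rule CollectI, rule exI[of _ "\<lambda>k. c *\<^sub>R x k"]) (use x L_scale[OF assms(1)] in auto)
qed

lemma Rq_Suc:
  assumes "(0,0) \<in> graph H"
  shows "Rq H q \<subseteq> Rq H (Suc q)"
proof
  fix a assume "a \<in> Rq H q"
  then obtain x where x: "x 0 = 0" "x q = a" "\<forall>k<q. x (Suc k) \<in> L_minus H (x k)"
    unfolding Rq_def by blast
  define x' where "x' = (\<lambda>k. if k = 0 then 0 else x (k - 1))"
  have "\<forall>k<Suc q. x' (Suc k) \<in> L_minus H (x' k)"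
  proof (intro allI impI)
    fix k assume "k < Suc q"
    show "x' (Suc k) \<in> L_minus H (x' k)"
    proof (cases k)
      case 0 then show ?thesis using x assms by (simp add: x'_def L_iff)
    next
      case (Suc m) then show ?thesis using x \<open>k < Suc q\<close> by (simp add: x'_def)
    qed
  qed
  then show "a \<in> Rq H (Suc q)" unfolding Rq_def using x by (auto simp: x'_def intro!: exI[of _ x'])
qed

lemma Rq_mono:
  assumes "(0,0) \<in> graph H" "q \<le> p"
  shows "Rq H q \<subseteq> Rq H p"
  using lift_Suc_mono_le[of "Rq H", OF Rq_Suc[OF assms(1)] assms(2)] .

lemma path_prefix:
  assumes "x 0 = 0" "\<forall>k<q. x (Suc k) \<in> L_minus H (x k)" "i \<le> q"
  shows "x i \<in> Rq H i"
  using assms unfolding Rq_def by auto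

lemma dual_perp:
  assumes "\<And>k a b. b \<in> L_minus H a \<Longrightarrow> inner (p (Suc k)) a = inner (p k) b"
    and "w 0 = 0" "\<forall>k<q. w (Suc k) \<in> L_minus H (w k)"
  shows "inner (p 0) (w q) = 0"
proof -
  have "\<forall>j. j \<le> q \<longrightarrow> inner (p 0) (w q) = inner (p j) (w (q - j))"
  proof
    fix j show "j \<le> q \<longrightarrow> inner (p 0) (w q) = inner (p j) (w (q - j))"
    proof (induction j)
      case 0 then show ?case by simp
    next
      case (Suc j)
      show ?case
      proof
        assume "Suc j \<le> q"
        then have e: "Suc (q - Suc j) = q - j" by simp
        have "w (q - j) \<in> L_minus H (w (q - Suc j))" using assms(3) \<open>Suc j \<le> q\<close> e
          by (metis diff_less lessI zero_less_Suc less_le_trans)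
        then have "inner (p (Suc j)) (w (q - Suc j)) = inner (p j) (w (q - j))" using assms(1) by blast
        then show "inner (p 0) (w q) = inner (p (Suc j)) (w (q - Suc j))" using Suc \<open>Suc j \<le> q\<close> by simp
      qed
    qed
  qed
  then have "inner (p 0) (w q) = inner (p q) (w (q - q))" by blast
  then show ?thesis using assms(2) by simp
qed

lemma feas_perp:
  assumes "\<And>q p a b. p \<in> G q \<Longrightarrow> b \<in> L_minus H a \<Longrightarrow> inner p a = inner q b"
    and "p0 \<in> feasible_set G" "m \<in> R_minus H"
  shows "inner p0 m = 0"
proof -
  obtain p where p: "p 0 = p0" "\<forall>k. p (Suc k) \<in> G (p k)" using assms(2) unfolding feasible_set_def by blast
  obtain q w where w: "w 0 = 0" "w q = m" "\<forall>k<q. w (Suc k) \<in> L_minus H (w k)"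
    using assms(3) unfolding R_minus_def reachable_set_def by blast
  have "inner (p 0) (w q) = 0"
    by (rule dual_perp[of H p w q]) (use assms(1) p w in auto)
  then show ?thesis using p w by simp
qed

lemma pos_perp:
  assumes "p0 \<in> feasible_set (pos_dual H)" "m \<in> R_minus H"
  shows "inner p0 m = 0"
proof (rule feas_perp[OF _ assms])
  fix q p a b assume "p \<in> pos_dual H q" "b \<in> L_minus H a"
  then have "inner p a \<le> inner q b" "inner p (-a) \<le> inner q (-b)"
    unfolding pos_dual_def L_iff by auto
  then show "inner p a = inner q b" by simp
qed

lemma neg_perp:
  assumes "p0 \<in> feasible_set (neg_dual H)" "m \<in> R_minus H"
  shows "inner p0 m = 0"
proof (rule feas_perp[OF _ assms])
  fix q p a b assume "p \<in> neg_dual H q" "b \<in> L_minus H a"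
  then have "inner p a \<ge> inner q b" "inner p (-a) \<ge> inner q (-b)"
    unfolding neg_dual_def L_iff by auto
  then show "inner p a = inner q b" by simp
qed

lemma zero_graph:
  assumes "convex_process H" "{a + b | a b. a \<in> sv_dom H \<and> b \<in> R_minus H} = UNIV"
  shows "(0,0) \<in> graph H"
proof -
  have "(0::'a) \<in> {a + b | a b. a \<in> sv_dom H \<and> b \<in> R_minus H}" using assms(2) by simp
  then obtain a where "a \<in> sv_dom H" by blast
  then obtain y where "y \<in> H a" unfolding sv_dom_def by blast
  then have "(a,y) \<in> graph H" by (simp add: graph_def)
  from g_scale[OF assms(1) this, of 0] show ?thesis by simp
qed

lemma uniform_N:
  fixes H :: "'a::euclidean_space \<Rightarrow> 'a set"
  assumes "convex_process H" "(0,0) \<in> graph H"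
  shows "\<exists>N. R_minus H \<subseteq> Rq H N"
proof -
  obtain B where B: "B \<subseteq> R_minus H" "independent B" "R_minus H \<subseteq> span B" "card B = dim (R_minus H)"
    by (rule basis_exists)
  have fin: "finite B" using B(2) finiteI_independent by blast
  have "\<forall>b\<in>B. \<exists>q. b \<in> Rq H q" using B(1) by (auto simp: R_minus_Rq)
  then obtain qf where qf: "\<forall>b\<in>B. b \<in> Rq H (qf b)" by metis
  define N where "N = sum qf B"
  have "B \<subseteq> Rq H N"
  proof
    fix b assume "b \<in> B"
    have "qf b \<le> N" unfolding N_def using fin \<open>b \<in> B\<close> by (metis le0 member_le_sum)
    then show "b \<in> Rq H N" using Rq_mono[OF assms(2) \<open>qf b \<le> N\<close>] qf \<open>b \<in> B\<close> by blast
  qed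
  then have "span B \<subseteq> Rq H N" by (rule span_minimal[OF _ Rq_subspace[OF assms]])
  then show ?thesis using B(3) by blast
qed

lemma feas_cover:
  fixes H :: "'a::euclidean_space \<Rightarrow> 'a set"
  assumes cp: "convex_process H" and cov: "{a + b | a b. a \<in> sv_dom H \<and> b \<in> R_minus H} = UNIV"
  shows "\<exists>x0\<in>feasible_set H. \<forall>q. (\<forall>b\<in>R_minus H. inner q b = 0) \<longrightarrow> inner q x0 = inner q z"
proof -
  have g0: "(0,0) \<in> graph H" using zero_graph[OF cp cov] .
  obtain N where N: "R_minus H \<subseteq> Rq H N" using uniform_N[OF cp g0] by blast
  have "\<forall>z. \<exists>r y. r \<in> Rq H N \<and> (z - r, y) \<in> graph H"
  proof
    fix z :: 'a
    have "z \<in> {a + b | a b. a \<in> sv_dom H \<and> b \<in> R_minus H}" using cov by simp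
    then obtain a b where ab: "z = a + b" "a \<in> sv_dom H" "b \<in> R_minus H" by blast
    then obtain y where "y \<in> H a" unfolding sv_dom_def by blast
    then have "(z - b, y) \<in> graph H" using ab by (simp add: graph_def)
    then show "\<exists>r y. r \<in> Rq H N \<and> (z - r, y) \<in> graph H" using ab N by blast
  qed
  then obtain rf yf where rf: "\<forall>z. rf z \<in> Rq H N \<and> (z - rf z, yf z) \<in> graph H" by metis
  have "\<forall>r\<in>Rq H N. \<exists>w. w 0 = 0 \<and> w N = r \<and> (\<forall>k<N. w (Suc k) \<in> L_minus H (w k))"
    unfolding Rq_def by blast
  then obtain Wf where Wf: "\<forall>r\<in>Rq H N. Wf r 0 = 0 \<and> Wf r N = r \<and> (\<forall>k<N. Wf r (Suc k) \<in> L_minus H (Wf r k))"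
    by metis
  define u where "u = rec_nat z (\<lambda>_ v. yf v)"
  have u0: "u 0 = z" and uS: "\<And>k. u (Suc k) = yf (u k)" by (simp_all add: u_def)
  define W where "W k = Wf (rf (u k))" for k
  have W0: "W k 0 = 0" and WN: "W k N = rf (u k)" and WS: "\<And>i. i < N \<Longrightarrow> W k (Suc i) \<in> L_minus H (W k i)" for k
    using Wf rf unfolding W_def by blast+
  have WR: "W k i \<in> R_minus H" if "i \<le> N" for k i
    using path_prefix[of "W k" N H i, OF W0 _ that] WS R_minus_Rq by blast
  define x where "x j = u j - (\<Sum>i<Suc N. W (j+N-i) i)" for j
  have step: "x (Suc j) \<in> H (x j)" for j
  proof -
    have A: "(\<Sum>i<N. W (j+N-i) (Suc i)) \<in> L_minus H (\<Sum>i<N. W (j+N-i) i)"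
      by (rule L_sum[OF cp g0]) (auto intro: WS)
    then have "(-(\<Sum>i<N. W (j+N-i) i), -(\<Sum>i<N. W (j+N-i) (Suc i))) \<in> graph H"
      unfolding L_iff by blast
    moreover have "(u j - rf (u j), u (Suc j)) \<in> graph H" using rf uS by simp
    ultimately have "(u j - rf (u j) + -(\<Sum>i<N. W (j+N-i) i), u (Suc j) + -(\<Sum>i<N. W (j+N-i) (Suc i))) \<in> graph H"
      using g_add[OF cp] by blast
    moreover have "x j = u j - rf (u j) + -(\<Sum>i<N. W (j+N-i) i)"
      unfolding x_def by (simp add: WN)
    moreover have "(\<Sum>i<Suc N. W (Suc j+N-i) i) = (\<Sum>i<N. W (j+N-i) (Suc i))"
      by (subst sum.lessThan_Suc_shift) (simp add: W0)
    then have "x (Suc j) = u (Suc j) + -(\<Sum>i<N. W (j+N-i) (Suc i))"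
      unfolding x_def by simp
    ultimately show ?thesis by (simp add: graph_def)
  qed
  have "x 0 \<in> feasible_set H" unfolding feasible_set_def using step by blast
  moreover have "inner q (x 0) = inner q z" if q: "\<forall>b\<in>R_minus H. inner q b = 0" for q
  proof -
    have "inner q (\<Sum>i<Suc N. W (0+N-i) i) = 0"
      unfolding inner_sum_right using q WR by (auto intro!: sum.neutral)
    then show ?thesis unfolding x_def u0 by (simp add: inner_diff_right)
  qed
  ultimately show ?thesis by blast
qed

lemma main_gen:
  fixes H :: "'a::euclidean_space \<Rightarrow> 'a set"
  assumes cp: "convex_process H" and cov: "{a + b | a b. a \<in> sv_dom H \<and> b \<in> R_minus H} = UNIV"
    and P: "\<And>p m. p \<in> P \<Longrightarrow> m \<in> R_minus H \<Longrightarrow> inner p m = 0" and P0: "0 \<in> P"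
  shows "neg_polar (feasible_set H) \<inter> closure P = {0}"
proof
  show "{0} \<subseteq> neg_polar (feasible_set H) \<inter> closure P"
    using P0 closure_subset by (auto simp: neg_polar_def)
next
  show "neg_polar (feasible_set H) \<inter> closure P \<subseteq> {0}"
  proof
    fix q assume q: "q \<in> neg_polar (feasible_set H) \<inter> closure P"
    have cl: "closed (\<Inter>m\<in>R_minus H. {p. inner m p = 0})"
      by (intro closed_INT ballI closed_hyperplane)
    have "P \<subseteq> (\<Inter>m\<in>R_minus H. {p. inner m p = 0})" using P by (auto simp: inner_commute)
    then have "closure P \<subseteq> (\<Inter>m\<in>R_minus H. {p. inner m p = 0})" using cl by (rule closure_minimal)
    then have qperp: "\<forall>b\<in>R_minus H. inner q b = 0" using q by (auto simp: inner_commute)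
    have "inner q z \<le> 0" for z
    proof -
      obtain x0 where "x0 \<in> feasible_set H" "inner q x0 = inner q z"
        using feas_cover[OF cp cov, of z] qperp by blast
      then show ?thesis using q by (auto simp: neg_polar_def inner_commute)
    qed
    then have "inner q q \<le> 0" by simp
    then show "q \<in> {0}" using inner_ge_zero[of q] by (simp add: order_antisym)
  qed
qed

lemma zero_feas_pos: "0 \<in> feasible_set (pos_dual H)"
  unfolding feasible_set_def pos_dual_def by (auto intro!: exI[of _ "\<lambda>_. 0"])

lemma zero_feas_neg: "0 \<in> feasible_set (neg_dual H)"
  unfolding feasible_set_def neg_dual_def by (auto intro!: exI[of _ "\<lambda>_. 0"])

theorem lemma2:
  fixes H :: "real ^ 'n \<Rightarrow> (real ^ 'n) set"
  assumes "convex_process H"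
    and "{a + b | a b. a \<in> sv_dom H \<and> b \<in> R_minus H} = UNIV"
  shows "neg_polar (feasible_set H) \<inter> closure (feasible_set (pos_dual H)) = {0} \<and>
         neg_polar (feasible_set H) \<inter> closure (feasible_set (neg_dual H)) = {0}"
proof
  show "neg_polar (feasible_set H) \<inter> closure (feasible_set (pos_dual H)) = {0}"
    by (rule main_gen[OF assms]) (auto intro: pos_perp zero_feas_pos)
  show "neg_polar (feasible_set H) \<inter> closure (feasible_set (neg_dual H)) = {0}"
    by (rule main_gen[OF assms]) (auto intro: neg_perp zero_feas_neg)
qed

end
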